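(* Let $f$ be a pdf supported on $[-\tfrac14,\tfrac14]$. Then $$2\big(\mathrm{Re}\,\hat f(1)\big)^2-1\le\mathrm{Re}\,\hat f(2)\le 2\,\mathrm{Re}\,\hat f(1)-1.$$
   Context: $\mathbb{T}=\mathbb{R}/\mathbb{Z}$; $\hat f(j)=\int_{\mathbb{T}} f(x)e^{-2\pi ijx}\,dx$. A pdf is a nonnegative function in $L^2(\mathbb{T})$ with integral 1; $[-\tfrac14,\tfrac14]$ is regarded as a subset of $\mathbb{T}$. *)

theory Defs
  imports "HOL-Analysis.Analysis"
begin

text \<open>Functions on the circle T = R/Z are represented as 1-periodic functions on R.
  Integrals over T are Lebesgue integrals over the fundamental domain [0,1].\<close>

definition circle_pdf :: "(real \<Rightarrow> real) \<Rightarrow> bool" where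
  "circle_pdf f \<longleftrightarrow>
     (\<forall>x. f (x + 1) = f x) \<and>
     f \<in> borel_measurable lborel \<and>
     set_integrable lborel {0..1} (\<lambda>x. (f x)\<^sup>2) \<and>
     (AE x in lborel. f x \<ge> 0) \<and>
     (LINT x : {0..1} | lborel. f x) = 1"

definition fourier_coeff :: "(real \<Rightarrow> real) \<Rightarrow> int \<Rightarrow> complex" where
  "fourier_coeff f j =
     (LINT x : {0..1} | lborel. complex_of_real (f x) * exp (- 2 * pi * \<i> * of_int j * of_real x))"

text \<open>f is supported on [-1/4,1/4] viewed in T: f vanishes (a.e.) at every point
  whose distance to the nearest integer exceeds 1/4.\<close>
definition supported_quarter :: "(real \<Rightarrow> real) \<Rightarrow> bool" where
  "supported_quarter f \<longleftrightarrow> (AE x in lborel. \<bar>x - real_of_int (round x)\<bar> > 1/4 \<longrightarrow> f x = 0)"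

end

theory Submission
  imports Defs
begin

lemma re_coeff:
  fixes f :: "real \<Rightarrow> real"
  assumes m: "f \<in> borel_measurable lborel"
    and gi: "integrable lborel (\<lambda>x. indicator {0..1} x * f x)"
  shows "Re (fourier_coeff f j) = (LINT x|lborel. indicator {0..1} x * f x * cos (2 * pi * j * x))"
proof -
  have ci: "integrable lborel (\<lambda>x. indicator {0..1} x *\<^sub>R (complex_of_real (f x) * exp (- 2 * pi * \<i> * of_int j * of_real x)))"
  proof (rule Bochner_Integration.integrable_bound[OF gi])
    show "(\<lambda>x. indicator {0..1} x *\<^sub>R (complex_of_real (f x) * exp (- 2 * pi * \<i> * of_int j * of_real x))) \<in> borel_measurable lborel"
      using m by measurable
    have "norm (exp (- 2 * pi * \<i> * of_int j * of_real x)) = 1" for x :: real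
    proof -
      have "- 2 * pi * \<i> * of_int j * of_real x = \<i> * complex_of_real (- 2 * pi * j * x)" by simp
      then show ?thesis by (simp only: norm_exp_i_times)
    qed
    then show "AE x in lborel. norm (indicator {0..1} x *\<^sub>R (complex_of_real (f x) * exp (- 2 * pi * \<i> * of_int j * of_real x))) \<le> norm (indicator {0..1} x * f x)"
      by (auto simp: norm_mult indicator_def)
  qed
  have "Re (fourier_coeff f j) = (LINT x|lborel. Re (indicator {0..1} x *\<^sub>R (complex_of_real (f x) * exp (- 2 * pi * \<i> * of_int j * of_real x))))"
    unfolding fourier_coeff_def set_lebesgue_integral_def using integral_Re[OF ci] by (rule sym)
  also have "\<dots> = (LINT x|lborel. indicator {0..1} x * f x * cos (2 * pi * j * x))"
  proof (rule Bochner_Integration.integral_cong[OF refl])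
    fix x :: real
    have "- 2 * pi * \<i> * of_int j * of_real x = \<i> * complex_of_real (- 2 * pi * j * x)" by simp
    then have "Re (exp (- 2 * pi * \<i> * of_int j * of_real x)) = cos (2 * pi * j * x)"
      by (simp only: Re_exp) simp
    then show "Re (indicator {0..1} x *\<^sub>R (complex_of_real (f x) * exp (- 2 * pi * \<i> * of_int j * of_real x))) = indicator {0..1} x * f x * cos (2 * pi * j * x)"
      by simp
  qed
  finally show ?thesis .
qed

lemma cos_nonneg_quarter:
  fixes x :: real
  assumes "\<not> \<bar>x - real_of_int (round x)\<bar> > 1/4"
  shows "0 \<le> cos (2 * pi * x)"
proof -
  define r where "r = round x"
  have "cos (2 * pi * x) = cos (2 * pi * (x - r) + (2 * pi) * of_int r)"
    by (simp add: algebra_simps)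
  also have "\<dots> = cos (2 * pi * (x - r))"
    by (simp only: cos_add cos_int_2pin sin_int_2pin)
  finally have e: "cos (2 * pi * x) = cos (2 * pi * (x - r))" .
  have "\<bar>x - r\<bar> \<le> 1/4" using assms r_def by simp
  then have t: "-(1/4) \<le> x - r" "x - r \<le> 1/4" by linarith+
  have "pi * (-(1/4)) \<le> pi * (x - r)" "pi * (x - r) \<le> pi * (1/4)"
    using mult_left_mono[OF t(1), of pi] mult_left_mono[OF t(2), of pi] pi_gt_zero by auto
  then have "-(pi/2) \<le> 2 * pi * (x - r)" "2 * pi * (x - r) \<le> pi/2" by auto
  then show ?thesis unfolding e by (rule cos_ge_zero)
qed

theorem lemma2p17:
  fixes f :: "real \<Rightarrow> real"
  assumes "circle_pdf f" and "supported_quarter f"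
  shows "2 * (Re (fourier_coeff f 1))\<^sup>2 - 1 \<le> Re (fourier_coeff f 2) \<and>
         Re (fourier_coeff f 2) \<le> 2 * Re (fourier_coeff f 1) - 1"
proof -
  define g where "g x = indicator {0..1} x * f x" for x :: real
  define c where "c x = cos (2 * pi * x)" for x :: real
  have fm[measurable]: "f \<in> borel_measurable lborel" using assms(1) unfolding circle_pdf_def by simp
  have gm[measurable]: "g \<in> borel_measurable lborel" unfolding g_def by measurable
  have cm[measurable]: "c \<in> borel_measurable lborel" unfolding c_def by measurable
  have int1: "(LINT x|lborel. g x) = 1"
    using assms(1) unfolding circle_pdf_def set_lebesgue_integral_def g_def by simp
  have gi: "integrable lborel g"
  proof (rule ccontr)
    assume "\<not> integrable lborel g"
    then have "(LINT x|lborel. g x) = 0" by (rule not_integrable_integral_eq)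
    with int1 show False by simp
  qed
  have gpos: "AE x in lborel. 0 \<le> g x"
    using assms(1) unfolding circle_pdf_def g_def by (auto simp: indicator_def)
  have supp: "AE x in lborel. 0 \<le> g x * (c x - (c x)\<^sup>2)"
    using assms(1,2) unfolding circle_pdf_def supported_quarter_def
  proof -
    have "AE x in lborel. f x \<ge> 0" using assms(1) unfolding circle_pdf_def by simp
    moreover have "AE x in lborel. \<bar>x - real_of_int (round x)\<bar> > 1/4 \<longrightarrow> f x = 0"
      using assms(2) unfolding supported_quarter_def by simp
    ultimately show ?thesis
    proof eventually_elim
      case (elim x)
      show ?case
      proof (cases "\<bar>x - real_of_int (round x)\<bar> > 1/4")
        case True then show ?thesis using elim by (simp add: g_def)
      next
        case False
        then have "0 \<le> c x" unfolding c_def by (rule cos_nonneg_quarter)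
        moreover have "c x \<le> 1" unfolding c_def by simp
        ultimately have "0 \<le> c x - (c x)\<^sup>2"
          by (simp add: power2_eq_square mult_le_cancel_left1 mult_left_le)
        moreover have "0 \<le> g x" using elim by (simp add: g_def indicator_def)
        ultimately show ?thesis by simp
      qed
    qed
  qed
  have bnd: "integrable lborel (\<lambda>x. g x * h x)" if "h \<in> borel_measurable lborel" "\<And>x. \<bar>h x\<bar> \<le> 1" for h
  proof (rule Bochner_Integration.integrable_bound[OF gi])
    show "(\<lambda>x. g x * h x) \<in> borel_measurable lborel" using that by measurable
    show "AE x in lborel. norm (g x * h x) \<le> norm (g x)"
      using that(2) by (intro AE_I2) (simp add: abs_mult mult_left_le)
  qed
  have i1: "integrable lborel (\<lambda>x. g x * c x)" by (rule bnd) (auto simp: c_def)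
  have i2: "integrable lborel (\<lambda>x. g x * (c x)\<^sup>2)"
    by (rule bnd) (auto simp: c_def abs_square_le_1)
  define m where "m = (LINT x|lborel. g x * c x)"
  define A where "A = (LINT x|lborel. g x * (c x)\<^sup>2)"
  have R1: "Re (fourier_coeff f 1) = m"
    using re_coeff[OF fm, of 1] gi unfolding m_def g_def c_def by simp
  have "Re (fourier_coeff f 2) = (LINT x|lborel. g x * cos (2 * pi * 2 * x))"
    using re_coeff[OF fm, of 2] gi unfolding g_def by simp
  also have "\<dots> = (LINT x|lborel. 2 * (g x * (c x)\<^sup>2) - g x)"
  proof (rule Bochner_Integration.integral_cong[OF refl])
    fix x :: real
    have "cos (2 * pi * 2 * x) = cos (2 * (2 * pi * x))" by (simp add: algebra_simps)
    also have "\<dots> = 2 * (c x)\<^sup>2 - 1" unfolding c_def by (rule cos_double_cos)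
    finally have E: "cos (2 * pi * 2 * x) = 2 * (c x)\<^sup>2 - 1" .
    show "g x * cos (2 * pi * 2 * x) = 2 * (g x * (c x)\<^sup>2) - g x"
      unfolding E by (simp add: algebra_simps)
  qed
  also have "\<dots> = 2 * A - 1"
    using i2 gi int1 unfolding A_def by simp
  finally have R2: "Re (fourier_coeff f 2) = 2 * A - 1" .
  have "0 \<le> (LINT x|lborel. g x * (c x - m)\<^sup>2)"
    using gpos by (intro integral_nonneg_AE) (auto elim!: eventually_mono)
  also have "(LINT x|lborel. g x * (c x - m)\<^sup>2) = (LINT x|lborel. g x * (c x)\<^sup>2 - 2 * m * (g x * c x) + m\<^sup>2 * g x)"
    by (rule Bochner_Integration.integral_cong[OF refl]) (simp add: power2_eq_square algebra_simps)
  also have "\<dots> = A - 2 * m * m + m\<^sup>2 * 1"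
    using i1 i2 gi int1 unfolding A_def m_def by simp
  finally have lo: "m\<^sup>2 \<le> A" by (simp add: power2_eq_square)
  have "0 \<le> (LINT x|lborel. g x * (c x - (c x)\<^sup>2))"
    using supp by (rule integral_nonneg_AE)
  also have "(LINT x|lborel. g x * (c x - (c x)\<^sup>2)) = (LINT x|lborel. g x * c x - g x * (c x)\<^sup>2)"
    by (simp add: algebra_simps)
  also have "\<dots> = m - A" using i1 i2 unfolding A_def m_def by simp
  finally have hi: "A \<le> m" by simp
  show ?thesis unfolding R1 R2 using lo hi by simp
qed

end
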